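(* Let $R>0$, $\sqrt3R\le s<t\le2R$, let $u,B:\mathbb{R}^3\to\mathbb{R}^3$ be smooth, let $p\in(\frac32,\frac92]$ with $p'=\frac{p}{p-1}$, let $q\ge1$, and set $$J_3=\frac{1}{t-s}\|B\|_{L^{2p'}(B_t\setminus B_{3R/2})}^2\|u\|_{L^p(B_t\setminus B_s)}.$$ (i) If $1\le q<2p'$, then for any $\delta>0$ there is $C_\delta>0$ (independent of $R,s,t,u,B$) such that $$J_3\le\delta\|B\|_{L^6(B_t\setminus B_{3R/2})}^2+\frac{C_\delta}{(t-s)^{\frac{(6-q)p'}{(3-p')q}}}\|u\|_{L^p(A_R)}^{\frac{(6-q)p'}{(3-p')q}}\|B\|_{L^q(A_R)}^2.$$ (ii) If $1\le q<2p'$, then $$J_3\le\frac{1}{t-s}\|u\|_{L^p(B_t\setminus B_s)}\|B\|_{L^q(B_t\setminus B_{3R/2})}^{\frac{2(3-p')q}{(6-q)p'}}\|B\|_{L^6(B_t\setminus B_{3R/2})}^{\frac{12p'-6q}{(6-q)p'}}.$$ (iii) If $q\ge2p'$, then there is $C>0$ (independent of $R,s,t,u,B$) such that $$J_3\le\frac{C}{t-s}R^{3-\frac3p-\frac6q}\|B\|_{L^q(A_R)}^2\|u\|_{L^p(A_R)}.$$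
   Context: For $r>0$, $B_r$ is the open ball of radius $r$ centered at the origin in $\mathbb{R}^3$, and $A_R=B_{2R}\setminus\overline{B_{3R/2}}$. *)

theory Defs
  imports "HOL-Analysis.Analysis"
begin

text \<open>Smooth (C-infinity) vector fields on R^3: f belongs to a family of continuous
  functions that is closed under taking all partial derivatives.\<close>
definition smooth3 :: "(real^3 \<Rightarrow> real^3) \<Rightarrow> bool" where
  "smooth3 f \<longleftrightarrow> (\<exists>S. f \<in> S \<and>
     (\<forall>g\<in>S. continuous_on UNIV g \<and>
        (\<forall>i::3. \<exists>g'\<in>S. \<forall>x.
           ((\<lambda>h. g (x + h *\<^sub>R axis i 1)) has_vector_derivative g' x) (at 0))))"

definition Lnorm :: "real \<Rightarrow> (real^3) set \<Rightarrow> (real^3 \<Rightarrow> real^3) \<Rightarrow> real" where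
  "Lnorm p S f = (LINT x:S|lebesgue. norm (f x) powr p) powr (1 / p)"

definition annulus :: "real \<Rightarrow> (real^3) set" where
  "annulus R = ball 0 (2*R) - cball 0 (3*R/2)"

end

theory Submission
  imports Defs
begin

lemma smooth3_cont: "smooth3 f \<Longrightarrow> continuous_on UNIV f"
  unfolding smooth3_def by blast

lemma cont_norm_powr:
  fixes f :: "real^3 \<Rightarrow> real^3"
  assumes "continuous_on UNIV f" "r > 0"
  shows "continuous_on UNIV (\<lambda>x. norm (f x) powr r)"
  by (rule continuous_on_powr') (use assms in \<open>auto intro!: continuous_intros\<close>)

lemma int_cont:
  fixes h :: "real^3 \<Rightarrow> real"
  assumes "continuous_on UNIV h" "S \<in> sets lebesgue" "bounded S"
  shows "set_integrable lebesgue S h"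
proof -
  obtain a where a: "S \<subseteq> cbox (-a) a" using bounded_subset_cbox_symmetric assms(3) by blast
  have "h absolutely_integrable_on cbox (-a) a"
    by (rule absolutely_integrable_continuous) (use continuous_on_subset assms(1) in blast)
  then show ?thesis using set_integrable_subset a assms(2) by blast
qed

lemma holder_w:
  fixes F G :: "'a \<Rightarrow> real"
  assumes a: "0 < a" "a < 1" and iF: "integrable M F" and iG: "integrable M G"
    and iH: "integrable M (\<lambda>x. F x powr a * G x powr (1-a))"
    and nF: "\<And>x. F x \<ge> 0" and nG: "\<And>x. G x \<ge> 0"
  shows "(\<integral>x. F x powr a * G x powr (1-a) \<partial>M) \<le> (\<integral>x. F x \<partial>M) powr a * (\<integral>x. G x \<partial>M) powr (1-a)"
proof -
  define A where "A = (\<integral>x. F x \<partial>M)"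
  define B where "B = (\<integral>x. G x \<partial>M)"
  have A0: "A \<ge> 0" unfolding A_def using nF by (simp add: integral_nonneg)
  have B0: "B \<ge> 0" unfolding B_def using nG by (simp add: integral_nonneg)
  show ?thesis
  proof (cases "A = 0 \<or> B = 0")
    case True
    then have "(AE x in M. F x = 0) \<or> (AE x in M. G x = 0)"
      unfolding A_def B_def using integral_nonneg_eq_0_iff_AE iF iG nF nG by auto
    then have "AE x in M. F x powr a * G x powr (1-a) = 0"
      by (elim disjE) (auto elim!: eventually_mono)
    then have "(\<integral>x. F x powr a * G x powr (1-a) \<partial>M) = (\<integral>x. 0 \<partial>M)"
      using iH by (intro integral_cong_AE) auto
    then show ?thesis by simp
  next
    case False
    then have Ap: "A > 0" and Bp: "B > 0" using A0 B0 by auto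
    have pw: "F x powr a * G x powr (1-a) \<le> A powr a * B powr (1-a) * (a * (F x / A) + (1-a) * (G x / B))" for x
    proof (cases "F x = 0 \<or> G x = 0")
      case True
      then show ?thesis using a nF[of x] nG[of x] Ap Bp by auto
    next
      case False
      then have fp: "F x > 0" "G x > 0" using nF[of x] nG[of x] by auto
      have "(F x / A) powr a * (G x / B) powr (1-a) \<le> a * (F x / A) + (1-a) * (G x / B)"
        by (rule Youngs_inequality_0) (use a fp Ap Bp in auto)
      moreover have "(F x / A) powr a * (G x / B) powr (1-a) * (A powr a * B powr (1-a)) = F x powr a * G x powr (1-a)"
        using Ap Bp by (simp add: powr_divide)
      ultimately show ?thesis
        by (metis mult.commute mult_left_mono powr_ge_zero zero_le_mult_iff)
    qed
    have "(\<integral>x. F x powr a * G x powr (1-a) \<partial>M) \<le> (\<integral>x. A powr a * B powr (1-a) * (a * (F x / A) + (1-a) * (G x / B)) \<partial>M)"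
    proof (rule integral_mono[OF iH _ pw])
      have "integrable M (\<lambda>x. a * (F x / A) + (1-a) * (G x / B))"
        using iF iG by auto
      then show "integrable M (\<lambda>x. A powr a * B powr (1-a) * (a * (F x / A) + (1-a) * (G x / B)))"
        by (rule integrable_mult_right)
    qed
    also have "\<dots> = A powr a * B powr (1-a) * (a * (A / A) + (1-a) * (B / B))"
      using iF iG by (simp add: A_def B_def)
    also have "\<dots> = A powr a * B powr (1-a)" using Ap Bp by simp
    finally show ?thesis unfolding A_def B_def .
  qed
qed

lemma holder_set:
  fixes f g h :: "'a \<Rightarrow> real"
  assumes a: "0 < a" "a < 1" and i: "set_integrable M S f" "set_integrable M S g" "set_integrable M S h"
    and hf: "\<And>x. h x = f x powr a * g x powr (1-a)"
    and nf: "\<And>x. f x \<ge> 0" and ng: "\<And>x. g x \<ge> 0"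
  shows "(LINT x:S|M. h x) \<le> (LINT x:S|M. f x) powr a * (LINT x:S|M. g x) powr (1-a)"
proof -
  have e: "indicator S x * h x = (indicator S x * f x) powr a * (indicator S x * g x) powr (1-a)" for x
    using a by (cases "x \<in> S") (auto simp: hf)
  have "(\<integral>x. (indicator S x * f x) powr a * (indicator S x * g x) powr (1-a) \<partial>M) \<le>
     (\<integral>x. indicator S x * f x \<partial>M) powr a * (\<integral>x. indicator S x * g x \<partial>M) powr (1-a)"
    apply (rule holder_w[OF a])
    using i nf ng by (auto simp: set_integrable_def e[symmetric])
  then show ?thesis unfolding set_lebesgue_integral_def by (simp add: e)
qed

lemma set_int_nonneg: "(\<And>x. f x \<ge> (0::real)) \<Longrightarrow> (LINT x:S|M. f x) \<ge> 0"
  unfolding set_lebesgue_integral_def by (auto intro!: integral_nonneg_AE)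

lemma ex_id: "(q::real) \<noteq> 6 \<Longrightarrow> q * ((6-2*P)/(6-q)) + 6 * (1 - ((6-2*P)/(6-q))) = 2*P"
proof -
  assume q6: "q \<noteq> 6"
  then have h: "6 - q \<noteq> 0" by simp
  define y where "y = (6-2*P)/(6-q)"
  have "(6-q) * y = 6 - 2*P" using h by (simp add: y_def)
  moreover have "q * y + 6 * (1 - y) = 6 - (6-q) * y"
    by (simp add: algebra_simps)
  ultimately show ?thesis unfolding y_def[symmetric] by simp
qed

lemma sq_powr: "(X powr c)^2 = X powr (2*c)" for X c :: real
  by (simp add: power2_eq_square powr_add[symmetric])

lemma sq_powr2: "(X::real) \<ge> 0 \<Longrightarrow> (X^2) powr c = X powr (2*c)"
  by (cases "X = 0") (auto simp: powr_powr[symmetric] powr_realpow)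

lemma int_norm_powr:
  fixes B :: "real^3 \<Rightarrow> real^3"
  assumes "continuous_on UNIV B" "r > 0" "S \<in> sets lebesgue" "bounded S"
  shows "set_integrable lebesgue S (\<lambda>x. norm (B x) powr r)"
  by (rule int_cont[OF cont_norm_powr]) (use assms in auto)

lemma Lnorm_nonneg: "Lnorm r S B \<ge> 0"
  unfolding Lnorm_def by simp

lemma interp:
  fixes B :: "real^3 \<Rightarrow> real^3"
  assumes q: "1 \<le> q" "q < 2*P" "P < 3" and c: "continuous_on UNIV B" "S \<in> sets lebesgue" "bounded S"
  shows "(Lnorm (2*P) S B)^2 \<le> Lnorm q S B powr (2*(3-P)*q/((6-q)*P))
             * Lnorm 6 S B powr ((12*P-6*q)/((6-q)*P))"
proof -
  define \<alpha> where "\<alpha> = (6-2*P)/(6-q)"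
  have P0: "P > 0" using q by auto
  have a: "0 < \<alpha>" "\<alpha> < 1" using q unfolding \<alpha>_def by (auto simp: field_simps)
  define Iq where "Iq = (LINT x:S|lebesgue. norm (B x) powr q)"
  define I6 where "I6 = (LINT x:S|lebesgue. norm (B x) powr 6)"
  define I2 where "I2 = (LINT x:S|lebesgue. norm (B x) powr (2*P))"
  have nn: "I2 \<ge> 0" "Iq \<ge> 0" "I6 \<ge> 0" unfolding I2_def Iq_def I6_def
    by (auto intro!: set_int_nonneg)
  have q6: "6 - q \<noteq> 0" using q by auto
  have ex: "q * \<alpha> + 6 * (1 - \<alpha>) = 2*P" using q unfolding \<alpha>_def by (intro ex_id) auto
  have hol: "I2 \<le> Iq powr \<alpha> * I6 powr (1-\<alpha>)"
    unfolding I2_def Iq_def I6_def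
  proof (rule holder_set[OF a int_norm_powr int_norm_powr int_norm_powr])
    fix x
    show "norm (B x) powr (2*P) = (norm (B x) powr q) powr \<alpha> * (norm (B x) powr 6) powr (1-\<alpha>)"
      unfolding powr_powr powr_add[symmetric] ex ..
  qed (use c q in auto)
  have "(Lnorm (2*P) S B)^2 = I2 powr (1/P)"
    unfolding Lnorm_def I2_def sq_powr using P0 by simp
  also have "\<dots> \<le> (Iq powr \<alpha> * I6 powr (1-\<alpha>)) powr (1/P)"
    using hol nn P0 by (intro powr_mono2) auto
  also have "\<dots> = Iq powr (\<alpha>/P) * I6 powr ((1-\<alpha>)/P)"
    by (simp add: powr_mult powr_powr)
  also have "\<dots> = Lnorm q S B powr (2*(3-P)*q/((6-q)*P)) * Lnorm 6 S B powr ((12*P-6*q)/((6-q)*P))"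
  proof -
    have e1: "\<alpha>/P = 1/q * (2*(3-P)*q/((6-q)*P))" using q P0 unfolding \<alpha>_def by (simp add: field_simps)
    have e2: "(1-\<alpha>)/P = 1/6 * ((12*P-6*q)/((6-q)*P))" using q P0 unfolding \<alpha>_def by (simp add: field_simps)
    show ?thesis unfolding Lnorm_def Iq_def[symmetric] I6_def[symmetric] powr_powr e1 e2 ..
  qed
  finally show ?thesis .
qed

lemma holder_const:
  fixes B :: "real^3 \<Rightarrow> real^3"
  assumes q: "2*P < q" "P > 0" and c: "continuous_on UNIV B" "S \<in> sets lebesgue" "bounded S"
  shows "(Lnorm (2*P) S B)^2 \<le> measure lebesgue S powr (1/P - 2/q) * (Lnorm q S B)^2"
proof -
  define \<alpha> where "\<alpha> = 2*P/q"
  have a: "0 < \<alpha>" "\<alpha> < 1" using q unfolding \<alpha>_def by (auto simp: field_simps)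
  define Iq where "Iq = (LINT x:S|lebesgue. norm (B x) powr q)"
  define I2 where "I2 = (LINT x:S|lebesgue. norm (B x) powr (2*P))"
  have nn: "I2 \<ge> 0" "Iq \<ge> 0" unfolding I2_def Iq_def
    by (auto intro!: set_int_nonneg)
  have i1: "set_integrable lebesgue S (\<lambda>x. 1::real)"
    by (rule int_cont) (use c in auto)
  have m: "(LINT x:S|lebesgue. (1::real)) = measure lebesgue S"
    using c(2) by (simp add: set_lebesgue_integral_def)
  have hol: "I2 \<le> Iq powr \<alpha> * (LINT x:S|lebesgue. (1::real)) powr (1-\<alpha>)"
    unfolding I2_def Iq_def
  proof (rule holder_set[OF a int_norm_powr i1 int_norm_powr])
    fix x
    show "norm (B x) powr (2*P) = (norm (B x) powr q) powr \<alpha> * 1 powr (1-\<alpha>)"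
      using q by (simp add: powr_powr \<alpha>_def)
  qed (use c q in auto)
  have "(Lnorm (2*P) S B)^2 = I2 powr (1/P)"
    unfolding Lnorm_def I2_def sq_powr using q by simp
  also have "\<dots> \<le> (Iq powr \<alpha> * measure lebesgue S powr (1-\<alpha>)) powr (1/P)"
    using hol nn q m by (intro powr_mono2) auto
  also have "\<dots> = Iq powr (\<alpha>/P) * measure lebesgue S powr ((1-\<alpha>)/P)"
    by (simp add: powr_mult powr_powr)
  also have "\<dots> = measure lebesgue S powr (1/P - 2/q) * (Lnorm q S B)^2"
  proof -
    have e1: "\<alpha>/P = 2*(1/q)" using q unfolding \<alpha>_def by (simp add: field_simps)
    have e2: "(1-\<alpha>)/P = 1/P - 2/q" using q unfolding \<alpha>_def by (simp add: field_simps)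
    show ?thesis unfolding Lnorm_def Iq_def[symmetric] sq_powr e1 e2 by simp
  qed
  finally show ?thesis .
qed

lemma Lnorm_mono:
  fixes B :: "real^3 \<Rightarrow> real^3"
  assumes c: "continuous_on UNIV B" "r > 0" "S \<in> sets lebesgue" "T \<in> sets lebesgue" "bounded S" "bounded T"
    and sub: "S \<subseteq> T \<union> N" and N: "N \<in> null_sets lebesgue"
  shows "Lnorm r S B \<le> Lnorm r T B"
proof -
  have iS: "set_integrable lebesgue S (\<lambda>x. norm (B x) powr r)" by (rule int_norm_powr) (use c in auto)
  have iT: "set_integrable lebesgue T (\<lambda>x. norm (B x) powr r)" by (rule int_norm_powr) (use c in auto)
  have "(LINT x:S|lebesgue. norm (B x) powr r) \<le> (LINT x:T|lebesgue. norm (B x) powr r)"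
    unfolding set_lebesgue_integral_def
  proof (rule integral_mono_AE)
    show "integrable lebesgue (\<lambda>x. indicat_real S x *\<^sub>R norm (B x) powr r)"
      using iS by (simp add: set_integrable_def)
    show "integrable lebesgue (\<lambda>x. indicat_real T x *\<^sub>R norm (B x) powr r)"
      using iT by (simp add: set_integrable_def)
    have "AE x in lebesgue. x \<notin> N" using N by (rule AE_not_in)
    then show "AE x in lebesgue. indicat_real S x *\<^sub>R norm (B x) powr r \<le> indicat_real T x *\<^sub>R norm (B x) powr r"
      by (rule eventually_mono) (use sub in \<open>auto simp: indicator_def\<close>)
  qed
  then show ?thesis unfolding Lnorm_def
    using c by (intro powr_mono2) (auto intro!: set_int_nonneg)
qed

lemma young_step:
  assumes th: "0 < \<theta>" "\<theta> < 1" and d: "\<delta> > 0"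
  shows "\<exists>C>0. \<forall>Y X::real. Y \<ge> 0 \<longrightarrow> X \<ge> 0 \<longrightarrow> Y * X powr (1-\<theta>) \<le> \<delta> * X + C * Y powr (1/\<theta>)"
proof -
  define k where "k = \<delta> / (1-\<theta>)"
  have k: "k > 0" using th d by (simp add: k_def)
  define K where "K = k powr (-(1-\<theta>)/\<theta>)"
  have K: "K > 0" using k by (simp add: K_def)
  show ?thesis
  proof (intro exI[of _ "\<theta> * K"] conjI allI impI)
    show "\<theta> * K > 0" using K th by simp
    fix Y X :: real assume Y: "Y \<ge> 0" and X: "X \<ge> 0"
    show "Y * X powr (1-\<theta>) \<le> \<delta> * X + \<theta> * K * Y powr (1/\<theta>)"
    proof (cases "Y = 0 \<or> X = 0")
      case True then show ?thesis using X Y th K d by auto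
    next
      case False
      then have Yp: "Y > 0" and Xp: "X > 0" using X Y by auto
      have "(K * Y powr (1/\<theta>)) powr \<theta> * (k * X) powr (1-\<theta>) \<le> \<theta> * (K * Y powr (1/\<theta>)) + (1-\<theta>) * (k * X)"
        by (rule Youngs_inequality_0) (use th K k Xp Yp in auto)
      moreover have "(K * Y powr (1/\<theta>)) powr \<theta> * (k * X) powr (1-\<theta>) = Y * X powr (1-\<theta>)"
      proof -
        have "(K * Y powr (1/\<theta>)) powr \<theta> * (k * X) powr (1-\<theta>)
            = (k powr (-(1-\<theta>)) * k powr (1-\<theta>)) * Y powr (1/\<theta> * \<theta>) * X powr (1-\<theta>)"
          using th by (simp add: K_def powr_mult powr_powr)
        also have "\<dots> = Y * X powr (1-\<theta>)"
          using th k Yp by (simp add: powr_add[symmetric])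
        finally show ?thesis .
      qed
      moreover have "(1-\<theta>) * (k * X) = \<delta> * X" using th by (simp add: k_def)
      ultimately show ?thesis by (simp add: algebra_simps)
    qed
  qed
qed

lemma geo:
  assumes R: "R > 0" "sqrt 3 * R \<le> s" "s < t" "t \<le> 2*R"
  shows "ball (0::real^3) t - ball 0 (3*R/2) \<in> sets lebesgue" "bounded (ball (0::real^3) t - ball 0 (3*R/2))"
    "ball (0::real^3) t - ball 0 s \<in> sets lebesgue" "bounded (ball (0::real^3) t - ball 0 s)"
    "annulus R \<in> sets lebesgue" "bounded (annulus R)"
    "ball (0::real^3) t - ball 0 s \<subseteq> annulus R \<union> {}"
    "ball (0::real^3) t - ball 0 (3*R/2) \<subseteq> annulus R \<union> sphere 0 (3*R/2)"
    "{} \<in> null_sets lebesgue" "sphere (0::real^3) (3*R/2) \<in> null_sets lebesgue"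
proof -
  have s3: "sqrt 3 > (3/2::real)" by (rule real_less_rsqrt) (simp add: power2_eq_square)
  have "3/2*R < sqrt 3 * R" using mult_strict_right_mono[OF s3 R(1)] .
  then have sR: "s > 3*R/2" using R by linarith
  show "ball (0::real^3) t - ball 0 (3*R/2) \<in> sets lebesgue" by auto
  show "bounded (ball (0::real^3) t - ball 0 (3*R/2))" by auto
  show "ball (0::real^3) t - ball 0 s \<in> sets lebesgue" by auto
  show "bounded (ball (0::real^3) t - ball 0 s)" by auto
  show "annulus R \<in> sets lebesgue" unfolding annulus_def by auto
  show "bounded (annulus R)" unfolding annulus_def by auto
  show "ball (0::real^3) t - ball 0 s \<subseteq> annulus R \<union> {}"
    unfolding annulus_def using sR R by auto
  show "ball (0::real^3) t - ball 0 (3*R/2) \<subseteq> annulus R \<union> sphere 0 (3*R/2)"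
    unfolding annulus_def using R by auto
  show "{} \<in> null_sets lebesgue" by simp
  show "sphere (0::real^3) (3*R/2) \<in> null_sets lebesgue"
    using negligible_sphere negligible_iff_null_sets by blast
qed

theorem lemma2p6:
  fixes p q :: real
  assumes hp: "3/2 < p" "p \<le> 9/2"
    and hq: "q \<ge> 1"
  defines "p' \<equiv> p / (p - 1)"
  defines "J3 \<equiv> (\<lambda>(R::real) (s::real) (t::real) (u::real^3 \<Rightarrow> real^3) (B::real^3 \<Rightarrow> real^3).
      1 / (t - s) * (Lnorm (2*p') (ball 0 t - ball 0 (3*R/2)) B)^2
        * Lnorm p (ball 0 t - ball 0 s) u)"
  shows
    "(q < 2*p' \<longrightarrow>
       (\<forall>\<delta>>0. \<exists>C>0. \<forall>R s t u B. R > 0 \<longrightarrow> sqrt 3 * R \<le> s \<longrightarrow> s < t \<longrightarrow> t \<le> 2*R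
          \<longrightarrow> smooth3 u \<longrightarrow> smooth3 B \<longrightarrow>
          J3 R s t u B \<le> \<delta> * (Lnorm 6 (ball 0 t - ball 0 (3*R/2)) B)^2
            + C / (t - s) powr ((6 - q) * p' / ((3 - p') * q))
              * Lnorm p (annulus R) u powr ((6 - q) * p' / ((3 - p') * q))
              * (Lnorm q (annulus R) B)^2))
     \<and> (q < 2*p' \<longrightarrow>
       (\<forall>R s t u B. R > 0 \<longrightarrow> sqrt 3 * R \<le> s \<longrightarrow> s < t \<longrightarrow> t \<le> 2*R
          \<longrightarrow> smooth3 u \<longrightarrow> smooth3 B \<longrightarrow>
          J3 R s t u B \<le> 1 / (t - s) * Lnorm p (ball 0 t - ball 0 s) u
            * Lnorm q (ball 0 t - ball 0 (3*R/2)) B powr (2 * (3 - p') * q / ((6 - q) * p'))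
            * Lnorm 6 (ball 0 t - ball 0 (3*R/2)) B powr ((12 * p' - 6 * q) / ((6 - q) * p'))))
     \<and> (q \<ge> 2*p' \<longrightarrow>
       (\<exists>C>0. \<forall>R s t u B. R > 0 \<longrightarrow> sqrt 3 * R \<le> s \<longrightarrow> s < t \<longrightarrow> t \<le> 2*R
          \<longrightarrow> smooth3 u \<longrightarrow> smooth3 B \<longrightarrow>
          J3 R s t u B \<le> C / (t - s) * R powr (3 - 3/p - 6/q)
            * (Lnorm q (annulus R) B)^2 * Lnorm p (annulus R) u))"
proof -
  have p1: "p' > 1" unfolding p'_def using hp by (simp add: field_simps)
  have p3: "p' < 3" unfolding p'_def using hp by (simp add: field_simps)
  have p0: "p > 0" using hp by simp
  have II: "J3 R s t u B \<le> 1 / (t - s) * Lnorm p (ball 0 t - ball 0 s) u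
            * Lnorm q (ball 0 t - ball 0 (3*R/2)) B powr (2 * (3 - p') * q / ((6 - q) * p'))
            * Lnorm 6 (ball 0 t - ball 0 (3*R/2)) B powr ((12 * p' - 6 * q) / ((6 - q) * p'))"
    if qs: "q < 2*p'" and R: "R > 0" "sqrt 3 * R \<le> s" "s < t" "t \<le> 2*R" and B: "smooth3 B" for R s t u B
  proof -
    have "(Lnorm (2*p') (ball 0 t - ball 0 (3*R/2)) B)^2 \<le>
        Lnorm q (ball 0 t - ball 0 (3*R/2)) B powr (2 * (3 - p') * q / ((6 - q) * p'))
            * Lnorm 6 (ball 0 t - ball 0 (3*R/2)) B powr ((12 * p' - 6 * q) / ((6 - q) * p'))"
      by (rule interp) (use hq qs p3 smooth3_cont[OF B] geo[OF R] in auto)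
    then have "(1 / (t - s) * Lnorm p (ball 0 t - ball 0 s) u) * (Lnorm (2*p') (ball 0 t - ball 0 (3*R/2)) B)^2 \<le>
        (1 / (t - s) * Lnorm p (ball 0 t - ball 0 s) u) * (Lnorm q (ball 0 t - ball 0 (3*R/2)) B powr (2 * (3 - p') * q / ((6 - q) * p'))
            * Lnorm 6 (ball 0 t - ball 0 (3*R/2)) B powr ((12 * p' - 6 * q) / ((6 - q) * p')))"
      by (rule mult_left_mono) (use R Lnorm_nonneg in simp)
    then show ?thesis unfolding J3_def by (simp add: mult_ac)
  qed
  have part1: "\<forall>\<delta>>0. \<exists>C>0. \<forall>R s t u B. R > 0 \<longrightarrow> sqrt 3 * R \<le> s \<longrightarrow> s < t \<longrightarrow> t \<le> 2*R
          \<longrightarrow> smooth3 u \<longrightarrow> smooth3 B \<longrightarrow>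
          J3 R s t u B \<le> \<delta> * (Lnorm 6 (ball 0 t - ball 0 (3*R/2)) B)^2
            + C / (t - s) powr ((6 - q) * p' / ((3 - p') * q))
              * Lnorm p (annulus R) u powr ((6 - q) * p' / ((3 - p') * q))
              * (Lnorm q (annulus R) B)^2" if qs: "q < 2*p'"
  proof (intro allI impI)
    fix \<delta> :: real assume d: "\<delta> > 0"
    define \<theta> where "\<theta> = (3-p')*q/((6-q)*p')"
    have th: "0 < \<theta>" "\<theta> < 1" using qs p1 p3 hq unfolding \<theta>_def by (auto simp: field_simps)
    have E: "1/\<theta> = (6 - q) * p' / ((3 - p') * q)" unfolding \<theta>_def by simp
    have e1: "2 * (3 - p') * q / ((6 - q) * p') = 2 * \<theta>" unfolding \<theta>_def by simp
    have e2: "(12 * p' - 6 * q) / ((6 - q) * p') = 2 * (1 - \<theta>)"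
    proof -
      have "6 - q \<noteq> 0" "p' \<noteq> 0" using qs p3 p1 by auto
      then show ?thesis unfolding \<theta>_def by (simp add: field_simps)
    qed
    obtain C where C: "C > 0" and Cy: "\<And>Y X::real. Y \<ge> 0 \<Longrightarrow> X \<ge> 0 \<Longrightarrow> Y * X powr (1-\<theta>) \<le> \<delta> * X + C * Y powr (1/\<theta>)"
      using young_step[OF th d] by blast
    show "\<exists>C>0. \<forall>R s t u B. R > 0 \<longrightarrow> sqrt 3 * R \<le> s \<longrightarrow> s < t \<longrightarrow> t \<le> 2*R
          \<longrightarrow> smooth3 u \<longrightarrow> smooth3 B \<longrightarrow>
          J3 R s t u B \<le> \<delta> * (Lnorm 6 (ball 0 t - ball 0 (3*R/2)) B)^2
            + C / (t - s) powr ((6 - q) * p' / ((3 - p') * q))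
              * Lnorm p (annulus R) u powr ((6 - q) * p' / ((3 - p') * q))
              * (Lnorm q (annulus R) B)^2"
    proof (intro exI[of _ C] conjI allI impI C)
      fix R s t u B assume R: "R > 0" "sqrt 3 * R \<le> s" "s < t" "t \<le> 2*R" and u: "smooth3 u" and B: "smooth3 B"
      define U where "U = Lnorm p (ball 0 t - ball 0 s) u"
      define Q where "Q = Lnorm q (ball 0 t - ball 0 (3*R/2)) B"
      define S where "S = Lnorm 6 (ball 0 t - ball 0 (3*R/2)) B"
      define UA where "UA = Lnorm p (annulus R) u"
      define QA where "QA = Lnorm q (annulus R) B"
      define Y where "Y = 1 / (t - s) * U * Q powr (2*\<theta>)"
      have nn: "U \<ge> 0" "Q \<ge> 0" "S \<ge> 0" "Y \<ge> 0" using R unfolding U_def Q_def S_def Y_def by (auto simp: Lnorm_nonneg)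
      have UU: "U \<le> UA" unfolding U_def UA_def
        by (rule Lnorm_mono) (use p0 smooth3_cont[OF u] geo[OF R] in auto)
      have QQ: "Q \<le> QA" unfolding Q_def QA_def
        using hq smooth3_cont[OF B] geo[OF R] by (intro Lnorm_mono[where N="sphere 0 (3*R/2)"]) auto
      have "J3 R s t u B \<le> Y * (S^2) powr (1-\<theta>)"
        using II[OF qs R B, of u] unfolding Y_def U_def[symmetric] Q_def[symmetric] S_def[symmetric] e1 e2
        using nn by (simp add: sq_powr2 mult_ac)
      also have "\<dots> \<le> \<delta> * S^2 + C * Y powr (1/\<theta>)" by (rule Cy) (use nn in auto)
      also have "Y powr (1/\<theta>) = 1 / (t - s) powr (1/\<theta>) * U powr (1/\<theta>) * Q^2"
      proof -
        have "Y powr (1/\<theta>) = 1 / (t - s) powr (1/\<theta>) * U powr (1/\<theta>) * Q powr (2*\<theta>*(1/\<theta>))"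
          unfolding Y_def by (simp add: powr_mult powr_divide powr_powr)
        also have "Q powr (2*\<theta>*(1/\<theta>)) = Q^2" using th nn sq_powr2[of Q 1] by simp
        finally show ?thesis .
      qed
      also have "\<delta> * S^2 + C * (1 / (t - s) powr (1/\<theta>) * U powr (1/\<theta>) * Q^2)
          \<le> \<delta> * S^2 + C * (1 / (t - s) powr (1/\<theta>) * UA powr (1/\<theta>) * QA^2)"
        using UU QQ nn C th
        by (intro add_left_mono mult_left_mono mult_mono powr_mono2 power_mono) auto
      finally show "J3 R s t u B \<le> \<delta> * (Lnorm 6 (ball 0 t - ball 0 (3*R/2)) B)^2
            + C / (t - s) powr ((6 - q) * p' / ((3 - p') * q))
              * Lnorm p (annulus R) u powr ((6 - q) * p' / ((3 - p') * q))
              * (Lnorm q (annulus R) B)^2"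
        unfolding S_def[symmetric] UA_def[symmetric] QA_def[symmetric] E[symmetric] by simp
    qed
  qed
  have part3: "\<exists>C>0. \<forall>R s t u B. R > 0 \<longrightarrow> sqrt 3 * R \<le> s \<longrightarrow> s < t \<longrightarrow> t \<le> 2*R
          \<longrightarrow> smooth3 u \<longrightarrow> smooth3 B \<longrightarrow>
          J3 R s t u B \<le> C / (t - s) * R powr (3 - 3/p - 6/q)
            * (Lnorm q (annulus R) B)^2 * Lnorm p (annulus R) u" if qs: "q \<ge> 2*p'"
  proof -
    define e where "e = 1/p' - 2/q"
    have e0: "e \<ge> 0" using qs p1 unfolding e_def by (simp add: field_simps)
    have e3: "3 * e = 3 - 3/p - 6/q" unfolding e_def p'_def using hp by (simp add: field_simps)
    define K where "K = measure lborel (ball (0::real^3) 1)"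
    have K: "K > 0" unfolding K_def by (rule content_ball_pos) simp
    define C where "C = (8*K) powr e"
    have C: "C > 0" using K by (simp add: C_def)
    show ?thesis
    proof (intro exI[of _ C] conjI allI impI C)
      fix R s t u B assume R: "R > 0" "sqrt 3 * R \<le> s" "s < t" "t \<le> 2*R" and u: "smooth3 u" and B: "smooth3 B"
      define U where "U = Lnorm p (ball 0 t - ball 0 s) u"
      define N where "N = Lnorm (2*p') (ball 0 t - ball 0 (3*R/2)) B"
      define Q where "Q = Lnorm q (ball 0 t - ball 0 (3*R/2)) B"
      define UA where "UA = Lnorm p (annulus R) u"
      define QA where "QA = Lnorm q (annulus R) B"
      have nn: "U \<ge> 0" "Q \<ge> 0" "N \<ge> 0" "QA \<ge> 0" unfolding U_def Q_def N_def QA_def by (auto simp: Lnorm_nonneg)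
      have UU: "U \<le> UA" unfolding U_def UA_def
        by (rule Lnorm_mono) (use p0 smooth3_cont[OF u] geo[OF R] in auto)
      have QQ: "Q \<le> QA" unfolding Q_def QA_def
        using hq smooth3_cont[OF B] geo[OF R] by (intro Lnorm_mono[where N="sphere 0 (3*R/2)"]) auto
      have NQ: "N^2 \<le> C * R powr (3 - 3/p - 6/q) * QA^2"
      proof (cases "q = 2*p'")
        case True
        then have "e = 0" unfolding e_def using p1 by simp
        then have "R powr (3 - 3/p - 6/q) = 1" using e3 R by simp
        moreover have "C \<ge> 1" using \<open>e = 0\<close> K by (simp add: C_def)
        moreover have "N^2 \<le> QA^2" using QQ nn unfolding N_def Q_def True[symmetric]
          by (intro power_mono) auto
        moreover have "QA^2 \<le> C * QA^2" using mult_right_mono[OF \<open>C \<ge> 1\<close>, of "QA^2"] by simp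
        ultimately show ?thesis by simp
      next
        case False
        then have qs': "2*p' < q" using qs by simp
        define m where "m = measure lebesgue (ball (0::real^3) t - ball 0 (3*R/2))"
        have "N^2 \<le> m powr (1/p' - 2/q) * Q^2"
          unfolding N_def Q_def m_def
          by (rule holder_const) (use qs' p1 smooth3_cont[OF B] geo[OF R] in auto)
        also have "m powr (1/p' - 2/q) \<le> C * R powr (3 - 3/p - 6/q)"
        proof -
          have "m \<le> measure lebesgue (ball (0::real^3) (2*R))"
            unfolding m_def by (rule measure_mono_fmeasurable) (use R in \<open>auto simp: lmeasurable_ball\<close>)
          also have "\<dots> = 8 * K * R^3"
            using content_ball_conv_unit_ball[of "2*R" "0::real^3"] R unfolding K_def by simp
          finally have mle: "m \<le> 8 * K * R^3" .
          have m0: "m \<ge> 0" by (simp add: m_def)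
          have "m powr e \<le> (8 * K * R^3) powr e" by (rule powr_mono2[OF e0 m0 mle])
          also have "\<dots> = C * R powr (3*e)"
          proof -
            have r3: "R^3 = R powr 3" using R(1) by (simp add: powr_numeral)
            have "(R^3) powr e = R powr (3*e)" unfolding r3 powr_powr ..
            then show ?thesis unfolding C_def powr_mult[of "8*K" "R^3" e] by simp
          qed
          finally have "m powr e \<le> C * R powr (3*e)" .
          then have "m powr e \<le> C * R powr (3 - 3/p - 6/q)" by (simp only: e3)
          then show ?thesis by (simp only: e_def)
        qed
        then have "m powr (1/p' - 2/q) * Q^2 \<le> C * R powr (3 - 3/p - 6/q) * QA^2"
          using QQ nn C by (intro mult_mono power_mono) auto
        finally show ?thesis .
      qed
      have "J3 R s t u B = (1/(t-s)) * N^2 * U" unfolding J3_def N_def U_def by simp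
      also have "\<dots> \<le> (1/(t-s)) * (C * R powr (3 - 3/p - 6/q) * QA^2) * UA"
        using NQ UU nn R C by (intro mult_mono mult_left_mono) auto
      also have "\<dots> = C / (t - s) * R powr (3 - 3/p - 6/q) * (Lnorm q (annulus R) B)^2 * Lnorm p (annulus R) u"
        unfolding QA_def UA_def by simp
      finally show "J3 R s t u B \<le> C / (t - s) * R powr (3 - 3/p - 6/q) * (Lnorm q (annulus R) B)^2 * Lnorm p (annulus R) u" .
    qed
  qed
  show ?thesis using part1 part3 II by blast
qed

end
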